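(* Let $\alpha\in(0,1)$ and let $Z_1,Z_2,\dots$ be i.i.d. random variables with the Sibuya$(\alpha)$ distribution $P(Z=k)=(-1)^{k-1}\binom{\alpha}{k}$, $k=1,2,\dots$. Let $\sigma_\alpha(0)=0$, $\sigma_\alpha(n)=\sum_{j=1}^n Z_j$ for $n\in\mathbb{N}$, and let $L_\alpha(t)=\max\{n\in\mathbb{N}_0:\sigma_\alpha(n)\le t\}$ for $t\in\mathbb{N}_0$ (the Sibuya counting process). Let $\sigma_*$ be an $\alpha$-stable subordinator, i.e. an increasing Lévy process with $\mathbb{E}e^{-\xi\sigma_*(t)}=e^{-t\xi^\alpha}$ for $\xi\ge 0$, and let $L_*(t)=\inf\{x\ge 0:\sigma_*(x)>t\}$ be its inverse hitting time process. Then for every $t\in\mathbb{R}^+$, the random variable $n^{-\alpha}L_\alpha(\lfloor nt\rfloor)$ converges in distribution to $L_*(t)$ as $n\to\infty$.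
   Context: $\lfloor a\rfloor$ denotes the largest integer less than or equal to $a$; $\mathbb{N}_0=\mathbb{N}\cup\{0\}$. The binomial coefficient with real upper argument is $\binom{x}{k}=x(x-1)\cdots(x-k+1)/k!$. *)

theory Defs
  imports "HOL-Probability.Probability"
begin

definition sibuya_pmf :: "real \<Rightarrow> nat \<Rightarrow> real" where
  "sibuya_pmf \<alpha> k = (-1) ^ (k - 1) * (\<alpha> gchoose k)"

definition sibuya_sum :: "(nat \<Rightarrow> 'a \<Rightarrow> nat) \<Rightarrow> nat \<Rightarrow> 'a \<Rightarrow> nat" where
  "sibuya_sum Z n \<omega> = (\<Sum>j\<in>{1..n}. Z j \<omega>)"

definition sibuya_count :: "(nat \<Rightarrow> 'a \<Rightarrow> nat) \<Rightarrow> nat \<Rightarrow> 'a \<Rightarrow> nat" where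
  "sibuya_count Z t \<omega> = Max {n. sibuya_sum Z n \<omega> \<le> t}"

definition stable_subordinator :: "'b measure \<Rightarrow> real \<Rightarrow> (real \<Rightarrow> 'b \<Rightarrow> real) \<Rightarrow> bool" where
  "stable_subordinator N \<alpha> S \<longleftrightarrow>
     prob_space N \<and>
     (\<forall>t\<ge>0. S t \<in> borel_measurable N) \<and>
     (\<forall>\<omega>\<in>space N. S 0 \<omega> = 0 \<and> mono_on {0..} (\<lambda>t. S t \<omega>) \<and>
        (\<forall>t\<ge>0. continuous (at_right t) (\<lambda>s. S s \<omega>))) \<and>
     (\<forall>(n::nat) (ts::nat \<Rightarrow> real). 0 \<le> ts 0 \<and> (\<forall>i<n. ts i \<le> ts (Suc i)) \<longrightarrow>
        prob_space.indep_vars N (\<lambda>_. borel) (\<lambda>i \<omega>. S (ts (Suc i)) \<omega> - S (ts i) \<omega>) {..<n}) \<and>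
     (\<forall>s\<ge>0. \<forall>t\<ge>0. distr N borel (\<lambda>\<omega>. S (s + t) \<omega> - S s \<omega>) = distr N borel (S t)) \<and>
     (\<forall>t\<ge>0. \<forall>\<xi>\<ge>0. prob_space.expectation N (\<lambda>\<omega>. exp (- \<xi> * S t \<omega>)) = exp (- t * \<xi> powr \<alpha>))"

definition inv_hitting :: "(real \<Rightarrow> 'b \<Rightarrow> real) \<Rightarrow> real \<Rightarrow> 'b \<Rightarrow> real" where
  "inv_hitting S t \<omega> = Inf {x. 0 \<le> x \<and> t < S x \<omega>}"

end

theory Submission
  imports Defs "HOL-Real_Asymp.Real_Asymp"
begin

lemma prob_int_diff_bound:
  fixes f h :: "'a \<Rightarrow> real"
  assumes "prob_space M" "integrable M f" "integrable M h"
    "\<And>\<omega>. \<omega> \<in> space M \<Longrightarrow> \<bar>f \<omega> - h \<omega>\<bar> \<le> c"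
  shows "\<bar>(\<integral>\<omega>. f \<omega> \<partial>M) - (\<integral>\<omega>. h \<omega> \<partial>M)\<bar> \<le> c"
proof -
  interpret prob_space M by fact
  have "\<bar>(\<integral>\<omega>. f \<omega> \<partial>M) - (\<integral>\<omega>. h \<omega> \<partial>M)\<bar> = \<bar>\<integral>\<omega>. f \<omega> - h \<omega> \<partial>M\<bar>"
    using assms by (simp add: integral_diff)
  also have "\<dots> \<le> (\<integral>\<omega>. \<bar>f \<omega> - h \<omega>\<bar> \<partial>M)"
    by (rule integral_abs_bound)
  also have "\<dots> \<le> c"
    using assms by (intro integral_le_const) auto
  finally show ?thesis .
qed

lemma bounded_cont_integrable:
  fixes g :: "real \<Rightarrow> real"
  assumes "prob_space M" "continuous_on UNIV g" "U \<in> borel_measurable M"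
    "\<And>\<omega>. \<omega> \<in> space M \<Longrightarrow> U \<omega> \<in> K" "compact K"
  shows "integrable M (\<lambda>\<omega>. g (U \<omega>))"
proof -
  interpret prob_space M by fact
  have "compact (g ` K)" using assms by (meson compact_continuous_image continuous_on_subset subset_UNIV)
  then obtain B where B: "\<And>x. x \<in> g ` K \<Longrightarrow> norm x \<le> B"
    by (meson bounded_iff compact_imp_bounded)
  have gm: "g \<in> borel_measurable borel" using assms(2) by (rule borel_measurable_continuous_onI)
  show ?thesis
  proof (rule integrable_const_bound[where B=B])
    show "AE x in M. norm (g (U x)) \<le> B" using B assms(4) by auto
    show "(\<lambda>\<omega>. g (U \<omega>)) \<in> borel_measurable M" using gm assms(3) by measurable
  qed
qed

lemma poly_conv:
  fixes U :: "nat \<Rightarrow> 'a \<Rightarrow> real" and V :: "'b \<Rightarrow> real" and g :: "real \<Rightarrow> real"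
  assumes M: "prob_space M" and N: "prob_space N"
    and Um: "\<And>n. U n \<in> borel_measurable M" and Vm: "V \<in> borel_measurable N"
    and Ur: "\<And>n \<omega>. \<omega> \<in> space M \<Longrightarrow> U n \<omega> \<in> {0..1}"
    and Vr: "\<And>\<omega>. \<omega> \<in> space N \<Longrightarrow> V \<omega> \<in> {0..1}"
    and mom: "\<And>i. (\<lambda>n. \<integral>\<omega>. U n \<omega> ^ i \<partial>M) \<longlonglongrightarrow> (\<integral>\<omega>. V \<omega> ^ i \<partial>N)"
    and g: "continuous_on UNIV g"
  shows "(\<lambda>n. \<integral>\<omega>. g (U n \<omega>) \<partial>M) \<longlonglongrightarrow> (\<integral>\<omega>. g (V \<omega>) \<partial>N)"
proof (rule LIMSEQ_I)
  fix r :: real assume r: "0 < r"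
  obtain p where p: "real_polynomial_function p" "\<And>x. x \<in> {0..1} \<Longrightarrow> \<bar>g x - p x\<bar> < r/3"
    using Stone_Weierstrass_real_polynomial_function [of "{0..1}" g "r/3"] g r
    by (metis compact_Icc continuous_on_subset divide_pos_pos subset_UNIV zero_less_numeral)
  then obtain a d where pd: "p = (\<lambda>x. \<Sum>i\<le>d. a i * x^i)"
    using real_polynomial_function_iff_sum by blast
  have pc: "continuous_on UNIV p" unfolding pd by (intro continuous_intros)
  have powc: "continuous_on UNIV (\<lambda>x::real. x ^ i)" for i by (intro continuous_intros)
  have intU: "integrable M (\<lambda>\<omega>. h (U n \<omega>))" if "continuous_on UNIV (h::real\<Rightarrow>real)" for h n
    by (rule bounded_cont_integrable[OF M that Um Ur]) auto
  have intV: "integrable N (\<lambda>\<omega>. h (V \<omega>))" if "continuous_on UNIV (h::real\<Rightarrow>real)" for h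
    by (rule bounded_cont_integrable[OF N that Vm Vr]) auto
  have pU: "(\<integral>\<omega>. p (U n \<omega>) \<partial>M) = (\<Sum>i\<le>d. a i * (\<integral>\<omega>. U n \<omega> ^ i \<partial>M))" for n
    unfolding pd using intU[OF powc] by (simp add: integral_sum integral_mult_right)
  have pV: "(\<integral>\<omega>. p (V \<omega>) \<partial>N) = (\<Sum>i\<le>d. a i * (\<integral>\<omega>. V \<omega> ^ i \<partial>N))"
    unfolding pd using intV[OF powc] by (simp add: integral_sum integral_mult_right)
  have "(\<lambda>n. \<integral>\<omega>. p (U n \<omega>) \<partial>M) \<longlonglongrightarrow> (\<integral>\<omega>. p (V \<omega>) \<partial>N)"
    unfolding pU pV by (intro tendsto_intros mom)
  then obtain no where no: "\<And>n. n \<ge> no \<Longrightarrow> norm ((\<integral>\<omega>. p (U n \<omega>) \<partial>M) - (\<integral>\<omega>. p (V \<omega>) \<partial>N)) < r/3"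
    using LIMSEQ_D[of _ _ "r/3"] r by (metis divide_pos_pos zero_less_numeral)
  have e1: "\<bar>(\<integral>\<omega>. g (U n \<omega>) \<partial>M) - (\<integral>\<omega>. p (U n \<omega>) \<partial>M)\<bar> \<le> r/3" for n
    by (rule prob_int_diff_bound[OF M intU[OF g] intU[OF pc]]) (use p Ur in \<open>auto intro: less_imp_le\<close>)
  have e2: "\<bar>(\<integral>\<omega>. g (V \<omega>) \<partial>N) - (\<integral>\<omega>. p (V \<omega>) \<partial>N)\<bar> \<le> r/3"
    by (rule prob_int_diff_bound[OF N intV[OF g] intV[OF pc]]) (use p Vr in \<open>auto intro: less_imp_le\<close>)
  show "\<exists>no. \<forall>n\<ge>no. norm ((\<integral>\<omega>. g (U n \<omega>) \<partial>M) - (\<integral>\<omega>. g (V \<omega>) \<partial>N)) < r"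
  proof (intro exI allI impI)
    fix n assume "no \<le> n"
    from no[OF this] e1[of n] e2 show "norm ((\<integral>\<omega>. g (U n \<omega>) \<partial>M) - (\<integral>\<omega>. g (V \<omega>) \<partial>N)) < r"
      by simp (smt (verit))
  qed
qed

lemma measure_le_integral:
  fixes f :: "'a \<Rightarrow> real"
  assumes "prob_space M" "integrable M f" "{\<omega>\<in>space M. P \<omega>} \<in> sets M"
    "\<And>\<omega>. \<omega> \<in> space M \<Longrightarrow> 0 \<le> f \<omega>" "\<And>\<omega>. \<omega> \<in> space M \<Longrightarrow> P \<omega> \<Longrightarrow> 1 \<le> f \<omega>"
  shows "measure M {\<omega>\<in>space M. P \<omega>} \<le> (\<integral>\<omega>. f \<omega> \<partial>M)"
proof -
  interpret prob_space M by fact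
  have "measure M {\<omega>\<in>space M. P \<omega>} = (\<integral>\<omega>. indicator {\<omega>\<in>space M. P \<omega>} \<omega> \<partial>M)"
    by (simp add: Int_absorb2)
  also have "\<dots> \<le> (\<integral>\<omega>. f \<omega> \<partial>M)"
    using assms by (intro integral_mono integrable_real_indicator) (auto simp: indicator_def emeasure_finite less_top[symmetric])
  finally show ?thesis .
qed

lemma integral_le_measure:
  fixes f :: "'a \<Rightarrow> real"
  assumes "prob_space M" "integrable M f" "{\<omega>\<in>space M. P \<omega>} \<in> sets M"
    "\<And>\<omega>. \<omega> \<in> space M \<Longrightarrow> f \<omega> \<le> 1" "\<And>\<omega>. \<omega> \<in> space M \<Longrightarrow> \<not> P \<omega> \<Longrightarrow> f \<omega> \<le> 0"
  shows "(\<integral>\<omega>. f \<omega> \<partial>M) \<le> measure M {\<omega>\<in>space M. P \<omega>}"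
proof -
  interpret prob_space M by fact
  have "(\<integral>\<omega>. f \<omega> \<partial>M) \<le> (\<integral>\<omega>. indicator {\<omega>\<in>space M. P \<omega>} \<omega> \<partial>M)"
    using assms by (intro integral_mono integrable_real_indicator) (auto simp: indicator_def emeasure_finite less_top[symmetric])
  also have "\<dots> = measure M {\<omega>\<in>space M. P \<omega>}"
    by (simp add: Int_absorb2)
  finally show ?thesis .
qed

lemma gconv_le:
  fixes W :: "nat \<Rightarrow> 'a \<Rightarrow> real" and Y :: "'b \<Rightarrow> real"
  assumes M: "prob_space M" and N: "prob_space N"
    and Wm: "\<And>n. W n \<in> borel_measurable M" and Ym: "Y \<in> borel_measurable N"
    and gc: "\<And>g::real\<Rightarrow>real. continuous_on UNIV g \<Longrightarrow> (\<And>u. 0 \<le> g u \<and> g u \<le> 1) \<Longrightarrow>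
               (\<lambda>n. \<integral>\<omega>. g (W n \<omega>) \<partial>M) \<longlonglongrightarrow> (\<integral>\<omega>. g (Y \<omega>) \<partial>N)"
    and e: "0 < e"
  shows "eventually (\<lambda>n. measure M {\<omega>\<in>space M. W n \<omega> \<le> b}
            \<le> measure N {\<omega>\<in>space N. Y \<omega> \<le> b} + e) sequentially"
proof -
  interpret N: prob_space N by fact
  define A where "A k = {\<omega>\<in>space N. Y \<omega> \<le> b + 1 / real (Suc k)}" for k
  have Aset: "range A \<subseteq> sets N" unfolding A_def using Ym by auto
  have Adec: "decseq A"
  proof (rule decseq_SucI)
    fix k
    have "1 / real (Suc (Suc k)) \<le> 1 / real (Suc k)" by (simp add: frac_le)
    then show "A (Suc k) \<subseteq> A k" unfolding A_def by force
  qed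
  have Aint: "(\<Inter>k. A k) = {\<omega>\<in>space N. Y \<omega> \<le> b}"
  proof (rule set_eqI, rule iffI)
    fix \<omega> assume "\<omega> \<in> (\<Inter>k. A k)"
    then have sp: "\<omega> \<in> space N" and le: "\<And>k. Y \<omega> \<le> b + 1 / real (Suc k)"
      unfolding A_def by auto
    have "Y \<omega> \<le> b"
    proof (rule ccontr)
      assume "\<not> Y \<omega> \<le> b"
      then obtain k where "inverse (real (Suc k)) < Y \<omega> - b"
        using reals_Archimedean[of "Y \<omega> - b"] by auto
      with le[of k] show False by (simp add: inverse_eq_divide)
    qed
    with sp show "\<omega> \<in> {\<omega>\<in>space N. Y \<omega> \<le> b}" by simp
  next
    fix \<omega> assume "\<omega> \<in> {\<omega>\<in>space N. Y \<omega> \<le> b}"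
    moreover have "b \<le> b + 1 / real (Suc k)" for k by simp
    ultimately show "\<omega> \<in> (\<Inter>k. A k)" unfolding A_def by (force intro: order.trans)
  qed
  have lim: "(\<lambda>k. measure N (A k)) \<longlonglongrightarrow> measure N {\<omega>\<in>space N. Y \<omega> \<le> b}"
    using N.finite_Lim_measure_decseq[OF Aset Adec] Aint by simp
  have "eventually (\<lambda>k. measure N (A k) < measure N {\<omega>\<in>space N. Y \<omega> \<le> b} + e/2) sequentially"
    by (rule order_tendstoD(2)[OF lim]) (use e in simp)
  then obtain k where k: "measure N (A k) < measure N {\<omega>\<in>space N. Y \<omega> \<le> b} + e/2"
    unfolding eventually_sequentially by blast
  define g where "g u = max 0 (min 1 (1 - real (Suc k) * (u - b)))" for u
  have gcont: "continuous_on UNIV g" unfolding g_def by (intro continuous_intros)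
  have g01: "0 \<le> g u \<and> g u \<le> 1" for u unfolding g_def by auto
  have gmeas: "g \<in> borel_measurable borel" using gcont by (rule borel_measurable_continuous_onI)
  have intW: "integrable M (\<lambda>\<omega>. g (W n \<omega>))" for n
    using prob_space.finite_measure[OF M] g01
    by (intro finite_measure.integrable_const_bound[where B=1]) (auto intro: measurable_compose[OF Wm gmeas])
  have intY: "integrable N (\<lambda>\<omega>. g (Y \<omega>))"
    using N.finite_measure g01
    by (intro finite_measure.integrable_const_bound[where B=1]) (auto intro: measurable_compose[OF Ym gmeas])
  have "eventually (\<lambda>n. (\<integral>\<omega>. g (W n \<omega>) \<partial>M) < (\<integral>\<omega>. g (Y \<omega>) \<partial>N) + e/2) sequentially"
    using gc[OF gcont g01] e by (intro order_tendstoD(2)) auto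
  then show ?thesis
  proof eventually_elim
    case (elim n)
    have "measure M {\<omega>\<in>space M. W n \<omega> \<le> b} \<le> (\<integral>\<omega>. g (W n \<omega>) \<partial>M)"
    proof (rule measure_le_integral[OF M intW])
      show "{\<omega> \<in> space M. W n \<omega> \<le> b} \<in> sets M" using Wm by auto
      show "0 \<le> g (W n \<omega>)" for \<omega> using g01 by auto
      fix \<omega> assume "W n \<omega> \<le> b"
      then have "real (Suc k) * (W n \<omega> - b) \<le> 0" by (intro mult_nonneg_nonpos) auto
      then show "1 \<le> g (W n \<omega>)" unfolding g_def by linarith
    qed
    moreover have "(\<integral>\<omega>. g (Y \<omega>) \<partial>N) \<le> measure N (A k)"
      unfolding A_def
    proof (rule integral_le_measure[OF N intY])
      show "{\<omega> \<in> space N. Y \<omega> \<le> b + 1 / real (Suc k)} \<in> sets N" using Ym by auto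
      show "g (Y \<omega>) \<le> 1" for \<omega> using g01 by auto
      fix \<omega> assume "\<not> Y \<omega> \<le> b + 1 / real (Suc k)"
      then have "1 < real (Suc k) * (Y \<omega> - b)"
        by (simp add: field_simps)
      then show "g (Y \<omega>) \<le> 0" unfolding g_def by simp
    qed
    ultimately show ?case using elim k by linarith
  qed
qed

lemma laplace_tool:
  fixes X :: "nat \<Rightarrow> 'a \<Rightarrow> real" and Y :: "'b \<Rightarrow> real"
  assumes M: "prob_space M" and N: "prob_space N"
    and Xm: "\<And>n. X n \<in> borel_measurable M" and Ym: "Y \<in> borel_measurable N"
    and Xnn: "\<And>n \<omega>. \<omega> \<in> space M \<Longrightarrow> 0 \<le> X n \<omega>"
    and Ynn: "\<And>\<omega>. \<omega> \<in> space N \<Longrightarrow> 0 \<le> Y \<omega>"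
    and lap: "\<And>m::nat. (\<lambda>n. \<integral>\<omega>. exp (- real m * X n \<omega>) \<partial>M) \<longlonglongrightarrow> (\<integral>\<omega>. exp (- real m * Y \<omega>) \<partial>N)"
    and e: "0 < e"
  shows "eventually (\<lambda>n. measure M {\<omega>\<in>space M. a \<le> X n \<omega>}
            \<le> measure N {\<omega>\<in>space N. a \<le> Y \<omega>} + e) sequentially"
    and "eventually (\<lambda>n. measure M {\<omega>\<in>space M. X n \<omega> \<le> a}
            \<le> measure N {\<omega>\<in>space N. Y \<omega> \<le> a} + e) sequentially"
proof -
  define U where "U n \<omega> = exp (- X n \<omega>)" for n \<omega>
  define V where "V \<omega> = exp (- Y \<omega>)" for \<omega>
  have Um: "U n \<in> borel_measurable M" for n unfolding U_def using Xm by measurable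
  have Vm: "V \<in> borel_measurable N" unfolding V_def using Ym by measurable
  have Ur: "U n \<omega> \<in> {0..1}" if "\<omega> \<in> space M" for n \<omega>
    using Xnn[OF that, of n] by (auto simp: U_def)
  have Vr: "V \<omega> \<in> {0..1}" if "\<omega> \<in> space N" for \<omega>
    using Ynn[OF that] by (auto simp: V_def)
  have mom: "(\<lambda>n. \<integral>\<omega>. U n \<omega> ^ i \<partial>M) \<longlonglongrightarrow> (\<integral>\<omega>. V \<omega> ^ i \<partial>N)" for i
  proof -
    have "U n \<omega> ^ i = exp (- real i * X n \<omega>)" for n \<omega>
      unfolding U_def by (simp add: exp_of_nat_mult[symmetric])
    moreover have "V \<omega> ^ i = exp (- real i * Y \<omega>)" for \<omega>
      unfolding V_def by (simp add: exp_of_nat_mult[symmetric])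
    ultimately show ?thesis using lap[of i] by simp
  qed
  have gU: "(\<lambda>n. \<integral>\<omega>. g (U n \<omega>) \<partial>M) \<longlonglongrightarrow> (\<integral>\<omega>. g (V \<omega>) \<partial>N)" if "continuous_on UNIV g" for g :: "real \<Rightarrow> real"
    by (rule poly_conv[OF M N Um Vm Ur Vr mom that])
  show "eventually (\<lambda>n. measure M {\<omega>\<in>space M. a \<le> X n \<omega>}
            \<le> measure N {\<omega>\<in>space N. a \<le> Y \<omega>} + e) sequentially"
  proof -
    have "eventually (\<lambda>n. measure M {\<omega>\<in>space M. U n \<omega> \<le> exp (-a)}
            \<le> measure N {\<omega>\<in>space N. V \<omega> \<le> exp (-a)} + e) sequentially"
      by (rule gconv_le[OF M N Um Vm gU e])
    moreover have "{\<omega>\<in>space M. U n \<omega> \<le> exp (-a)} = {\<omega>\<in>space M. a \<le> X n \<omega>}" for n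
      by (auto simp: U_def)
    moreover have "{\<omega>\<in>space N. V \<omega> \<le> exp (-a)} = {\<omega>\<in>space N. a \<le> Y \<omega>}"
      by (auto simp: V_def)
    ultimately show ?thesis by simp
  qed
  show "eventually (\<lambda>n. measure M {\<omega>\<in>space M. X n \<omega> \<le> a}
            \<le> measure N {\<omega>\<in>space N. Y \<omega> \<le> a} + e) sequentially"
  proof -
    have Um': "(\<lambda>\<omega>. - U n \<omega>) \<in> borel_measurable M" for n using Um by measurable
    have Vm': "(\<lambda>\<omega>. - V \<omega>) \<in> borel_measurable N" using Vm by measurable
    have gU': "(\<lambda>n. \<integral>\<omega>. g (- U n \<omega>) \<partial>M) \<longlonglongrightarrow> (\<integral>\<omega>. g (- V \<omega>) \<partial>N)"
      if "continuous_on UNIV g" for g :: "real \<Rightarrow> real"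
    proof -
      have "continuous_on UNIV (\<lambda>u. g (- u))"
        using that by (intro continuous_on_compose2[OF that]) (auto intro: continuous_intros)
      from gU[OF this] show ?thesis .
    qed
    have "eventually (\<lambda>n. measure M {\<omega>\<in>space M. - U n \<omega> \<le> - exp (-a)}
            \<le> measure N {\<omega>\<in>space N. - V \<omega> \<le> - exp (-a)} + e) sequentially"
      by (rule gconv_le[OF M N Um' Vm' gU' e])
    moreover have "{\<omega>\<in>space M. - U n \<omega> \<le> - exp (-a)} = {\<omega>\<in>space M. X n \<omega> \<le> a}" for n
      by (auto simp: U_def)
    moreover have "{\<omega>\<in>space N. - V \<omega> \<le> - exp (-a)} = {\<omega>\<in>space N. Y \<omega> \<le> a}"
      by (auto simp: V_def)
    ultimately show ?thesis by simp
  qed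
qed

lemma nat_rv_sums:
  fixes Z :: "'a \<Rightarrow> nat" and g :: "nat \<Rightarrow> real"
  assumes M: "prob_space M" and Zm: "Z \<in> measurable M (count_space UNIV)"
    and gB: "\<And>k. \<bar>g k\<bar> \<le> B"
  shows "(\<lambda>k. g k * measure M {\<omega>\<in>space M. Z \<omega> = k}) sums (\<integral>\<omega>. g (Z \<omega>) \<partial>M)"
proof -
  interpret prob_space M by fact
  define E where "E k = {\<omega>\<in>space M. Z \<omega> = k}" for k
  have Es: "E k \<in> sets M" for k unfolding E_def using Zm by measurable
  define f where "f k \<omega> = g k * indicator (E k) \<omega>" for k \<omega>
  have fint: "integrable M (f k)" for k
    unfolding f_def using Es by (intro integrable_mult_right integrable_real_indicator) (auto simp: emeasure_finite less_top[symmetric])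
  have fsum: "(\<Sum>k. f k \<omega>) = g (Z \<omega>)" if "\<omega> \<in> space M" for \<omega>
  proof -
    have "(\<Sum>k. f k \<omega>) = (\<Sum>k\<in>{Z \<omega>}. f k \<omega>)"
      by (rule suminf_finite) (auto simp: f_def E_def)
    also have "\<dots> = g (Z \<omega>)" using that by (simp add: f_def E_def)
    finally show ?thesis .
  qed
  have disj: "disjoint_family E" unfolding disjoint_family_on_def E_def by auto
  have msum: "(\<lambda>k. measure M (E k)) sums measure M (\<Union>k. E k)"
    using finite_measure_UNION[of E] Es disj by auto
  have intf: "(\<integral>\<omega>. f k \<omega> \<partial>M) = g k * measure M (E k)" for k
    unfolding f_def using Es by simp
  have intnf: "(\<integral>\<omega>. norm (f k \<omega>) \<partial>M) = \<bar>g k\<bar> * measure M (E k)" for k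
    unfolding f_def using Es by (simp add: abs_mult)
  have "(\<lambda>k. (\<integral>\<omega>. f k \<omega> \<partial>M)) sums (\<integral>\<omega>. (\<Sum>k. f k \<omega>) \<partial>M)"
  proof (rule sums_integral[OF fint])
    show "AE x in M. summable (\<lambda>i. norm (f i x))"
    proof (rule AE_I2)
      fix x assume "x \<in> space M"
      show "summable (\<lambda>i. norm (f i x))"
        by (rule summable_finite[of "{Z x}"]) (auto simp: f_def E_def)
    qed
    show "summable (\<lambda>i. \<integral>x. norm (f i x) \<partial>M)"
      unfolding intnf
    proof (rule summable_comparison_test)
      show "summable (\<lambda>k. B * measure M (E k))"
        using msum by (intro summable_mult) (simp add: sums_summable)
      show "\<exists>N. \<forall>n\<ge>N. norm (\<bar>g n\<bar> * measure M (E n)) \<le> B * measure M (E n)"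
        using gB by (auto intro!: mult_right_mono)
    qed
  qed
  moreover have "(\<integral>\<omega>. (\<Sum>k. f k \<omega>) \<partial>M) = (\<integral>\<omega>. g (Z \<omega>) \<partial>M)"
    using fsum by (intro Bochner_Integration.integral_cong) auto
  ultimately show ?thesis unfolding intf E_def by simp
qed

lemma sib_one:
  fixes Z :: "'a \<Rightarrow> nat"
  assumes a0: "0 < \<alpha>" and a1: "\<alpha> < 1" and M: "prob_space M"
    and Zm: "Z \<in> measurable M (count_space UNIV)"
    and pmf: "\<And>k. 1 \<le> k \<Longrightarrow> measure M {\<omega>\<in>space M. Z \<omega> = k} = sibuya_pmf \<alpha> k"
  shows sib0: "measure M {\<omega>\<in>space M. Z \<omega> = 0} = 0"
    and siblap: "\<And>s. 0 \<le> s \<Longrightarrow> (\<integral>\<omega>. exp (- s * real (Z \<omega>)) \<partial>M) = 1 - (1 - exp (-s)) powr \<alpha>"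
proof -
  interpret prob_space M by fact
  define q where "q k = measure M {\<omega>\<in>space M. Z \<omega> = k}" for k
  have intb: "integrable M (\<lambda>\<omega>. exp (- s * real (Z \<omega>)))" if "0 \<le> s" for s
  proof (rule integrable_const_bound[where B=1])
    show "AE x in M. norm (exp (- s * real (Z x))) \<le> 1" using that by (auto intro!: AE_I2)
    show "(\<lambda>\<omega>. exp (- s * real (Z \<omega>))) \<in> borel_measurable M" using Zm by measurable
  qed
  have key: "(\<integral>\<omega>. exp (- s * real (Z \<omega>)) \<partial>M) = q 0 + 1 - (1 - exp (-s)) powr \<alpha>" if s: "0 < s" for s
  proof -
    have S1: "(\<lambda>k. exp (- s * real k) * q k) sums (\<integral>\<omega>. exp (- s * real (Z \<omega>)) \<partial>M)"
      unfolding q_def by (rule nat_rv_sums[OF M Zm, where B=1]) (use s in auto)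
    have "\<bar>- exp (-s)\<bar> < 1" using s by simp
    from gen_binomial_real[OF this, of \<alpha>]
    have S2: "(\<lambda>n. (\<alpha> gchoose n) * (- exp (-s)) ^ n) sums (1 - exp (-s)) powr \<alpha>" by simp
    have S3: "(\<lambda>k. if k = 0 then q 0 + 1 else 0) sums (q 0 + 1)"
      using sums_single[of 0 "\<lambda>_. q 0 + 1"] by simp
    have eq: "exp (- s * real k) * q k = (if k = 0 then q 0 + 1 else 0) - (\<alpha> gchoose k) * (- exp (-s)) ^ k" for k
    proof (cases k)
      case 0 then show ?thesis by simp
    next
      case (Suc j)
      have 3: "q k = (-1) ^ j * (\<alpha> gchoose k)" using pmf[of k] Suc by (simp add: q_def sibuya_pmf_def)
      have 4: "exp (- s * real k) = exp (-s) ^ k"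
        by (metis exp_of_nat_mult mult.commute mult_minus_left)
      have 1: "(- exp (-s))^k = (-1)^k * exp (-s)^k" by (rule power_minus)
      have 2: "(-1::real)^k = - ((-1)^j)" by (simp add: Suc)
      show ?thesis unfolding 1 2 3 4 using Suc by (simp add: algebra_simps)
    qed
    have "(\<lambda>k. exp (- s * real k) * q k) sums (q 0 + 1 - (1 - exp (-s)) powr \<alpha>)"
      unfolding eq by (rule sums_diff[OF S3 S2])
    with S1 show ?thesis using sums_unique2 by blast
  qed
  have le1: "(\<integral>\<omega>. exp (- s * real (Z \<omega>)) \<partial>M) \<le> 1" if "0 \<le> s" for s
    using that by (intro integral_le_const intb AE_I2) auto
  have qle: "q 0 \<le> (1 - exp (-s)) powr \<alpha>" if "0 < s" for s
    using key[OF that] le1[of s] that by simp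
  have lim: "((\<lambda>s. (1 - exp (-s)) powr \<alpha>) \<longlongrightarrow> 0) (at_right 0)"
    using a0 by real_asymp
  have "q 0 \<le> 0"
  proof (rule tendsto_le[OF _ lim tendsto_const])
    show "at_right (0::real) \<noteq> bot" by simp
    show "\<forall>\<^sub>F x in at_right 0. q 0 \<le> (1 - exp (- x)) powr \<alpha>"
      using eventually_at_right_less[of "0::real"] by (rule eventually_mono) (rule qle)
  qed
  moreover have "0 \<le> q 0" unfolding q_def by simp
  ultimately have q0: "q 0 = 0" by simp
  then show "measure M {\<omega>\<in>space M. Z \<omega> = 0} = 0" by (simp add: q_def)
  fix s :: real assume "0 \<le> s"
  then show "(\<integral>\<omega>. exp (- s * real (Z \<omega>)) \<partial>M) = 1 - (1 - exp (-s)) powr \<alpha>"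
  proof (cases "s = 0")
    case True then show ?thesis by (simp add: prob_space)
  next
    case False then show ?thesis using key q0 \<open>0 \<le> s\<close> by simp
  qed
qed

lemma sib_lim:
  fixes \<alpha> \<xi> x :: real
  assumes a0: "0 < \<alpha>" and a1: "\<alpha> < 1" and xi: "0 < \<xi>" and x: "0 \<le> x"
  shows "(\<lambda>n. (1 - (1 - exp (- \<xi> / real n)) powr \<alpha>) ^ (nat \<lfloor>x * real n powr \<alpha>\<rfloor> + 1))
           \<longlonglongrightarrow> exp (- x * \<xi> powr \<alpha>)"
proof -
  define b where "b n = 1 - (1 - exp (- \<xi> / real n)) powr \<alpha>" for n
  define y where "y n = x * real n powr \<alpha>" for n
  define k where "k n = nat \<lfloor>y n\<rfloor> + 1" for n
  have b01: "0 < b n \<and> b n < 1" if "n \<ge> 1" for n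
  proof -
    have "exp (- \<xi> / real n) < 1" using that xi by simp
    moreover have "0 < exp (- \<xi> / real n)" by simp
    ultimately have u: "0 < 1 - exp (- \<xi> / real n)" "1 - exp (- \<xi> / real n) < 1" by linarith+
    have "0 < (1 - exp (- \<xi> / real n)) powr \<alpha>" using u(1) by (simp only: powr_gt_zero)
    moreover have "(1 - exp (- \<xi> / real n)) powr \<alpha> < 1 powr \<alpha>"
      using a0 u by (intro powr_less_mono2) auto
    ultimately show ?thesis unfolding b_def by auto
  qed
  have yk: "y n < real (k n) \<and> real (k n) \<le> y n + 1" for n
  proof -
    have "0 \<le> y n" unfolding y_def using x by simp
    then show ?thesis unfolding k_def by linarith
  qed
  have A: "(\<lambda>n. b n powr y n) \<longlonglongrightarrow> exp (- x * \<xi> powr \<alpha>)"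
  proof (cases "x = 0")
    case True
    have "eventually (\<lambda>n. b n powr y n = 1) sequentially"
      using eventually_ge_at_top[of 1]
    proof eventually_elim
      case (elim n)
      then have "b n \<noteq> 0" using b01[of n] by auto
      then show ?case using True by (simp add: y_def)
    qed
    then show ?thesis using True by (simp add: tendsto_eventually)
  next
    case False
    then have "0 < x" using x by simp
    have "((\<lambda>n::real. (1 - (1 - exp (- \<xi> / n)) powr \<alpha>) powr (x * n powr \<alpha>)) \<longlongrightarrow> exp (- x * \<xi> powr \<alpha>)) at_top"
      using a0 a1 xi \<open>0 < x\<close> by real_asymp
    then show ?thesis unfolding b_def y_def
      using filterlim_compose filterlim_real_sequentially by blast
  qed
  have b1: "b \<longlonglongrightarrow> 1"
  proof -
    have "((\<lambda>n::real. 1 - (1 - exp (- \<xi> / n)) powr \<alpha>) \<longlongrightarrow> 1) at_top"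
      using a0 a1 xi by real_asymp
    then show ?thesis unfolding b_def
      using filterlim_compose filterlim_real_sequentially by blast
  qed
  have B: "(\<lambda>n. b n powr (real (k n) - y n)) \<longlonglongrightarrow> 1"
  proof (rule tendsto_sandwich[OF _ _ b1 tendsto_const])
    show "eventually (\<lambda>n. b n \<le> b n powr (real (k n) - y n)) sequentially"
      using eventually_ge_at_top[of 1]
    proof eventually_elim
      case (elim n)
      have "b n powr 1 \<le> b n powr (real (k n) - y n)"
        using b01[OF elim] yk[of n] by (intro powr_mono') auto
      then show ?case using b01[OF elim] by simp
    qed
    show "eventually (\<lambda>n. b n powr (real (k n) - y n) \<le> 1) sequentially"
      using eventually_ge_at_top[of 1]
    proof eventually_elim
      case (elim n)
      show ?case using b01[OF elim] yk[of n] by (intro powr_le1) auto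
    qed
  qed
  have "(\<lambda>n. b n powr y n * b n powr (real (k n) - y n)) \<longlonglongrightarrow> exp (- x * \<xi> powr \<alpha>) * 1"
    by (rule tendsto_mult[OF A B])
  moreover have "eventually (\<lambda>n. b n powr y n * b n powr (real (k n) - y n) = b n ^ k n) sequentially"
    using eventually_ge_at_top[of 1]
  proof eventually_elim
    case (elim n)
    have "b n powr y n * b n powr (real (k n) - y n) = b n powr real (k n)"
      by (simp add: powr_add[symmetric])
    also have "\<dots> = b n ^ k n" using b01[OF elim] by (simp add: powr_realpow)
    finally show ?case .
  qed
  ultimately have "(\<lambda>n. b n ^ k n) \<longlonglongrightarrow> exp (- x * \<xi> powr \<alpha>)"
    using Lim_transform_eventually by fastforce
  then show ?thesis unfolding b_def y_def k_def .
qed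

lemma sum_lap:
  fixes Z :: "nat \<Rightarrow> 'a \<Rightarrow> nat"
  assumes M: "prob_space M"
    and ind: "prob_space.indep_vars M (\<lambda>_. count_space UNIV) Z {1..}"
    and s: "0 \<le> s"
    and lapZ: "\<And>i. 1 \<le> i \<Longrightarrow> (\<integral>\<omega>. exp (- s * real (Z i \<omega>)) \<partial>M) = c"
  shows "(\<integral>\<omega>. exp (- s * real (sibuya_sum Z k \<omega>)) \<partial>M) = c ^ k"
proof -
  interpret prob_space M by fact
  have Zm: "Z i \<in> measurable M (count_space UNIV)" if "1 \<le> i" for i
    using ind that unfolding indep_vars_def by auto
  have ind2: "indep_vars (\<lambda>_. borel) (\<lambda>i \<omega>. exp (- s * real (Z i \<omega>))) {1..k}"
  proof (rule indep_vars_compose2[where X=Z and M'="\<lambda>_. count_space UNIV"])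
    show "indep_vars (\<lambda>_. count_space UNIV) Z {1..k}"
      by (rule indep_vars_subset[OF ind]) auto
  qed auto
  have "(\<integral>\<omega>. exp (- s * real (sibuya_sum Z k \<omega>)) \<partial>M)
      = (\<integral>\<omega>. (\<Prod>i\<in>{1..k}. exp (- s * real (Z i \<omega>))) \<partial>M)"
    by (simp add: sibuya_sum_def exp_sum sum_distrib_left)
  also have "\<dots> = (\<Prod>i\<in>{1..k}. \<integral>\<omega>. exp (- s * real (Z i \<omega>)) \<partial>M)"
  proof (rule indep_vars_lebesgue_integral[OF _ ind2])
    fix i assume i: "i \<in> {1..k}"
    show "integrable M (\<lambda>\<omega>. exp (- s * real (Z i \<omega>)))"
    proof (rule integrable_const_bound[where B=1])
      show "AE x in M. norm (exp (- s * real (Z i x))) \<le> 1" using s by (auto intro!: AE_I2)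
      have [measurable]: "Z i \<in> measurable M (count_space UNIV)" using Zm[of i] i by simp
      show "(\<lambda>\<omega>. exp (- s * real (Z i \<omega>))) \<in> borel_measurable M" by measurable
    qed
  qed simp
  also have "\<dots> = c ^ k" using lapZ by simp
  finally show ?thesis .
qed

lemma sub_basic:
  assumes "stable_subordinator N \<alpha> S"
  shows sub_prob: "prob_space N"
    and sub_meas: "\<And>y. 0 \<le> y \<Longrightarrow> S y \<in> borel_measurable N"
    and sub_mono: "\<And>\<omega> y y'. \<omega> \<in> space N \<Longrightarrow> 0 \<le> y \<Longrightarrow> y \<le> y' \<Longrightarrow> S y \<omega> \<le> S y' \<omega>"
    and sub_zero: "\<And>\<omega>. \<omega> \<in> space N \<Longrightarrow> S 0 \<omega> = 0"
    and sub_nonneg: "\<And>\<omega> y. \<omega> \<in> space N \<Longrightarrow> 0 \<le> y \<Longrightarrow> 0 \<le> S y \<omega>"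
    and sub_rc: "\<And>\<omega> y. \<omega> \<in> space N \<Longrightarrow> 0 \<le> y \<Longrightarrow> continuous (at_right y) (\<lambda>s. S s \<omega>)"
    and sub_lap: "\<And>y \<xi>. 0 \<le> y \<Longrightarrow> 0 \<le> \<xi> \<Longrightarrow> (\<integral>\<omega>. exp (- \<xi> * S y \<omega>) \<partial>N) = exp (- y * \<xi> powr \<alpha>)"
proof -
  note d = assms[unfolded stable_subordinator_def]
  show "prob_space N" using d by blast
  show "\<And>y. 0 \<le> y \<Longrightarrow> S y \<in> borel_measurable N" using d by blast
  show mo: "\<And>\<omega> y y'. \<omega> \<in> space N \<Longrightarrow> 0 \<le> y \<Longrightarrow> y \<le> y' \<Longrightarrow> S y \<omega> \<le> S y' \<omega>"
    using d unfolding mono_on_def by auto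
  show z: "\<And>\<omega>. \<omega> \<in> space N \<Longrightarrow> S 0 \<omega> = 0" using d by blast
  show "\<And>\<omega> y. \<omega> \<in> space N \<Longrightarrow> 0 \<le> y \<Longrightarrow> 0 \<le> S y \<omega>"
    using mo z by (metis order_refl)
  show "\<And>\<omega> y. \<omega> \<in> space N \<Longrightarrow> 0 \<le> y \<Longrightarrow> continuous (at_right y) (\<lambda>s. S s \<omega>)"
    using d by blast
  show "\<And>y \<xi>. 0 \<le> y \<Longrightarrow> 0 \<le> \<xi> \<Longrightarrow> (\<integral>\<omega>. exp (- \<xi> * S y \<omega>) \<partial>N) = exp (- y * \<xi> powr \<alpha>)"
    using d by blast
qed

lemma lap_unique:
  fixes X Y :: "'b \<Rightarrow> real"
  assumes N: "prob_space N" and Xm: "X \<in> borel_measurable N" and Ym: "Y \<in> borel_measurable N"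
    and Xnn: "\<And>\<omega>. \<omega> \<in> space N \<Longrightarrow> 0 \<le> X \<omega>" and Ynn: "\<And>\<omega>. \<omega> \<in> space N \<Longrightarrow> 0 \<le> Y \<omega>"
    and eq: "\<And>m::nat. (\<integral>\<omega>. exp (- real m * X \<omega>) \<partial>N) = (\<integral>\<omega>. exp (- real m * Y \<omega>) \<partial>N)"
  shows "measure N {\<omega>\<in>space N. a \<le> X \<omega>} \<le> measure N {\<omega>\<in>space N. a \<le> Y \<omega>}"
proof (rule field_le_epsilon)
  fix e :: real assume e: "0 < e"
  have "eventually (\<lambda>n::nat. measure N {\<omega>\<in>space N. a \<le> X \<omega>}
            \<le> measure N {\<omega>\<in>space N. a \<le> Y \<omega>} + e) sequentially"
    by (rule laplace_tool(1)[OF N N _ Ym _ Ynn _ e, where X="\<lambda>_. X"]) (use Xm Xnn eq in auto)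
  then show "measure N {\<omega>\<in>space N. a \<le> X \<omega>} \<le> measure N {\<omega>\<in>space N. a \<le> Y \<omega>} + e"
    by (auto simp: eventually_sequentially)
qed

lemma sub_scaling:
  assumes sub: "stable_subordinator N \<alpha> S" and a0: "0 < \<alpha>"
    and y: "0 \<le> y" "y < y'" and t: "0 < t"
  shows "measure N {\<omega>\<in>space N. t \<le> S y \<omega>} \<le> measure N {\<omega>\<in>space N. t < S y' \<omega>}"
proof (cases "y = 0")
  case True
  have "{\<omega>\<in>space N. t \<le> S y \<omega>} = {}" using True sub_zero[OF sub] t by auto
  then have "measure N {\<omega>\<in>space N. t \<le> S y \<omega>} = 0" by (simp only: measure_empty)
  then show ?thesis by (metis measure_nonneg)
next
  case False
  then have y0: "0 < y" using y by simp
  interpret prob_space N using sub_prob[OF sub] .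
  define c where "c = (y' / y) powr (1 / \<alpha>)"
  have c1: "1 < c" unfolding c_def using y0 y a0 by (intro gr_one_powr) (auto simp: field_simps)
  have cpow: "c powr \<alpha> = y' / y" unfolding c_def using y0 y a0 by (simp add: powr_powr)
  have m1[measurable]: "S y \<in> borel_measurable N" "S y' \<in> borel_measurable N"
    using sub_meas[OF sub] y by auto
  have "measure N {\<omega>\<in>space N. t \<le> S y \<omega>} \<le> measure N {\<omega>\<in>space N. t \<le> S y' \<omega> / c}"
  proof (rule lap_unique[OF sub_prob[OF sub]])
    show "S y \<in> borel_measurable N" "(\<lambda>\<omega>. S y' \<omega> / c) \<in> borel_measurable N" by measurable
    show "0 \<le> S y \<omega>" if "\<omega> \<in> space N" for \<omega> using sub_nonneg[OF sub that] y by simp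
    show "0 \<le> S y' \<omega> / c" if "\<omega> \<in> space N" for \<omega> using sub_nonneg[OF sub that, of y'] y c1 by simp
    fix m :: nat
    have "(\<integral>\<omega>. exp (- real m * (S y' \<omega> / c)) \<partial>N) = (\<integral>\<omega>. exp (- (real m / c) * S y' \<omega>) \<partial>N)"
      by simp
    also have "\<dots> = exp (- y' * (real m / c) powr \<alpha>)"
      using sub_lap[OF sub, of y' "real m / c"] y c1 by simp
    also have "(real m / c) powr \<alpha> = real m powr \<alpha> * y / y'"
      using c1 cpow y0 y by (simp add: powr_divide)
    also have "- y' * (real m powr \<alpha> * y / y') = - y * real m powr \<alpha>"
      using y0 y by (simp add: field_simps)
    also have "exp (- y * real m powr \<alpha>) = (\<integral>\<omega>. exp (- real m * S y \<omega>) \<partial>N)"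
      using sub_lap[OF sub, of y "real m"] y by simp
    finally show "(\<integral>\<omega>. exp (- real m * S y \<omega>) \<partial>N) = (\<integral>\<omega>. exp (- real m * (S y' \<omega> / c)) \<partial>N)"
      by simp
  qed
  also have "\<dots> \<le> measure N {\<omega>\<in>space N. t < S y' \<omega>}"
  proof (rule finite_measure_mono)
    show "{\<omega>\<in>space N. t < S y' \<omega>} \<in> sets N" by measurable
    show "{\<omega>\<in>space N. t \<le> S y' \<omega> / c} \<subseteq> {\<omega>\<in>space N. t < S y' \<omega>}"
    proof safe
      fix \<omega> assume "\<omega> \<in> space N" "t \<le> S y' \<omega> / c"
      then have "t * c \<le> S y' \<omega>" using c1 by (simp add: field_simps)
      moreover have "t < t * c" using t c1 by simp
      ultimately show "t < S y' \<omega>" by simp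
    qed
  qed
  finally show ?thesis .
qed

lemma sub_Ec_null:
  assumes sub: "stable_subordinator N \<alpha> S"
  shows "{\<omega>\<in>space N. \<forall>j::nat. S (real j) \<omega> \<le> t} \<in> sets N"
    and "measure N {\<omega>\<in>space N. \<forall>j::nat. S (real j) \<omega> \<le> t} = 0"
proof -
  interpret prob_space N using sub_prob[OF sub] .
  have [measurable]: "S (real j) \<in> borel_measurable N" for j :: nat using sub_meas[OF sub] by simp
  show Es: "{\<omega>\<in>space N. \<forall>j::nat. S (real j) \<omega> \<le> t} \<in> sets N" by measurable
  have bnd: "measure N {\<omega>\<in>space N. \<forall>j::nat. S (real j) \<omega> \<le> t} \<le> exp (t - real j)" for j :: nat
  proof -
    have "measure N {\<omega>\<in>space N. \<forall>j::nat. S (real j) \<omega> \<le> t} \<le> measure N {\<omega>\<in>space N. S (real j) \<omega> \<le> t}"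
      by (rule finite_measure_mono) auto
    also have "\<dots> \<le> (\<integral>\<omega>. exp t * exp (- 1 * S (real j) \<omega>) \<partial>N)"
    proof (rule measure_le_integral[OF sub_prob[OF sub]])
      show "integrable N (\<lambda>\<omega>. exp t * exp (- 1 * S (real j) \<omega>))"
      proof (rule integrable_const_bound[where B="exp t"])
        show "AE x in N. norm (exp t * exp (- 1 * S (real j) x)) \<le> exp t"
          using sub_nonneg[OF sub] by (auto intro!: AE_I2)
      qed measurable
      show "{\<omega> \<in> space N. S (real j) \<omega> \<le> t} \<in> sets N" by measurable
      show "0 \<le> exp t * exp (- 1 * S (real j) \<omega>)" for \<omega> by simp
      fix \<omega> assume "S (real j) \<omega> \<le> t"
      then have "1 \<le> exp (t - S (real j) \<omega>)" by simp
      then show "1 \<le> exp t * exp (- 1 * S (real j) \<omega>)" by (simp add: exp_diff exp_minus field_simps)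
    qed
    also have "\<dots> = exp t * exp (- real j * 1 powr \<alpha>)"
      using sub_lap[OF sub, of "real j" 1] by simp
    also have "\<dots> = exp (t - real j)" by (simp add: exp_diff exp_minus field_simps)
    finally show ?thesis .
  qed
  have lim: "(\<lambda>j::nat. exp (t - real j)) \<longlonglongrightarrow> 0" by real_asymp
  have "measure N {\<omega>\<in>space N. \<forall>j::nat. S (real j) \<omega> \<le> t} \<le> 0"
    by (rule LIMSEQ_le_const[OF lim]) (use bnd in blast)
  moreover have "0 \<le> measure N {\<omega>\<in>space N. \<forall>j::nat. S (real j) \<omega> \<le> t}" by (rule measure_nonneg)
  ultimately show "measure N {\<omega>\<in>space N. \<forall>j::nat. S (real j) \<omega> \<le> t} = 0" by linarith
qed

lemma inv_hitting_le:
  assumes "0 \<le> y" "t < S y \<omega>"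
  shows "inv_hitting S t \<omega> \<le> y"
  unfolding inv_hitting_def using assms
  by (intro cInf_lower) (auto intro: bdd_belowI[where m=0])

lemma inv_hitting_nonneg:
  assumes "t < S (real j) \<omega>"
  shows "0 \<le> inv_hitting S t \<omega>"
proof -
  have "real j \<in> {x. 0 \<le> x \<and> t < S x \<omega>}" using assms by simp
  then have ne: "{x. 0 \<le> x \<and> t < S x \<omega>} \<noteq> {}" by blast
  show ?thesis unfolding inv_hitting_def by (rule cInf_greatest[OF ne]) simp
qed

lemma inv_hitting_imp:
  assumes sub: "stable_subordinator N \<alpha> S" and \<omega>: "\<omega> \<in> space N"
    and j: "t < S (real j) \<omega>" and y: "0 \<le> y" and le: "inv_hitting S t \<omega> \<le> y"
  shows "t \<le> S y \<omega>"
proof (rule ccontr)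
  assume "\<not> t \<le> S y \<omega>"
  then have lt: "S y \<omega> < t" by simp
  have "((\<lambda>s. S s \<omega>) \<longlongrightarrow> S y \<omega>) (at_right y)"
    using sub_rc[OF sub \<omega> y] by (simp add: continuous_within)
  then have "eventually (\<lambda>s. S s \<omega> < t) (at_right y)"
    using lt by (rule order_tendstoD(2))
  then obtain b where b: "y < b" and bb: "\<And>s. y < s \<Longrightarrow> s < b \<Longrightarrow> S s \<omega> < t"
    unfolding eventually_at_right_field by blast
  have "b \<le> inv_hitting S t \<omega>"
    unfolding inv_hitting_def
  proof (rule cInf_greatest)
    have "real j \<in> {x. 0 \<le> x \<and> t < S x \<omega>}" using j by simp
    then show "{x. 0 \<le> x \<and> t < S x \<omega>} \<noteq> {}" by blast
    fix x assume x: "x \<in> {x. 0 \<le> x \<and> t < S x \<omega>}"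
    show "b \<le> x"
    proof (rule ccontr)
      assume "\<not> b \<le> x"
      then have xb: "x < b" by simp
      show False
      proof (cases "y < x")
        case True then show False using bb[OF True xb] x by auto
      next
        case False
        then have "S x \<omega> \<le> S y \<omega>" using sub_mono[OF sub \<omega>] x by auto
        then show False using x lt by auto
      qed
    qed
  qed
  with b le show False by simp
qed

lemma dyadic_between:
  fixes a c :: real
  assumes "0 \<le> a" "a < c"
  shows "\<exists>n k::nat. a < real k / 2 ^ n \<and> real k / 2 ^ n < c"
proof -
  obtain n :: nat where n: "1 / (c - a) < 2 ^ n"
    using real_arch_pow[of 2 "1 / (c - a)"] by auto
  have p: "(0::real) < 2 ^ n" by simp
  have n': "1 < (c - a) * 2 ^ n" using n assms(2) by (simp add: field_simps)
  define k where "k = nat \<lfloor>a * 2 ^ n\<rfloor> + 1"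
  have k1: "a * 2 ^ n < real k" unfolding k_def using assms(1) by linarith
  have "0 \<le> a * 2 ^ n" using assms(1) by simp
  then have "real (nat \<lfloor>a * 2 ^ n\<rfloor>) = of_int \<lfloor>a * 2 ^ n\<rfloor>" by simp
  then have k2: "real k \<le> a * 2 ^ n + 1" unfolding k_def using of_int_floor_le[of "a * 2 ^ n"] by simp
  have "a < real k / 2 ^ n" using k1 p by (simp add: field_simps)
  moreover have "real k / 2 ^ n < c" using k2 n' p by (simp add: field_simps)
  ultimately show ?thesis by blast
qed

lemma inv_hitting_empty:
  assumes sub: "stable_subordinator N \<alpha> S" and \<omega>: "\<omega> \<in> space N"
    and E: "\<forall>j::nat. S (real j) \<omega> \<le> t"
  shows "inv_hitting S t \<omega> = Inf ({}::real set)"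
proof -
  have "{x. 0 \<le> x \<and> t < S x \<omega>} = {}"
  proof (rule ccontr)
    assume "{x. 0 \<le> x \<and> t < S x \<omega>} \<noteq> {}"
    then obtain x where x: "0 \<le> x" "t < S x \<omega>" by auto
    have "x \<le> real (nat \<lceil>x\<rceil>)" by linarith
    then have "S x \<omega> \<le> S (real (nat \<lceil>x\<rceil>)) \<omega>" using sub_mono[OF sub \<omega> x(1)] by simp
    with E x show False by (metis not_le order.strict_trans2)
  qed
  then show ?thesis unfolding inv_hitting_def by (simp only:)
qed

lemma inv_hitting_less_iff:
  assumes sub: "stable_subordinator N \<alpha> S" and \<omega>: "\<omega> \<in> space N"
    and j: "t < S (real j) \<omega>"
  shows "inv_hitting S t \<omega> < c \<longleftrightarrow> (\<exists>n k::nat. real k / 2 ^ n < c \<and> t < S (real k / 2 ^ n) \<omega>)"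
proof
  have "real j \<in> {x. 0 \<le> x \<and> t < S x \<omega>}" using j by simp
  then have ne: "{x. 0 \<le> x \<and> t < S x \<omega>} \<noteq> {}" by blast
  assume "inv_hitting S t \<omega> < c"
  then obtain a where a: "a \<in> {x. 0 \<le> x \<and> t < S x \<omega>}" "a < c"
    unfolding inv_hitting_def using cInf_lessD[OF ne] by blast
  obtain n k :: nat where nk: "a < real k / 2 ^ n" "real k / 2 ^ n < c"
    using dyadic_between[of a c] a by auto
  have "S a \<omega> \<le> S (real k / 2 ^ n) \<omega>" using sub_mono[OF sub \<omega>] a nk by auto
  then show "\<exists>n k::nat. real k / 2 ^ n < c \<and> t < S (real k / 2 ^ n) \<omega>"
    using a nk by (metis mem_Collect_eq order.strict_trans2)
next
  assume "\<exists>n k::nat. real k / 2 ^ n < c \<and> t < S (real k / 2 ^ n) \<omega>"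
  then obtain n k :: nat where nk: "real k / 2 ^ n < c" "t < S (real k / 2 ^ n) \<omega>" by blast
  have "inv_hitting S t \<omega> \<le> real k / 2 ^ n"
    by (rule inv_hitting_le) (use nk in auto)
  with nk show "inv_hitting S t \<omega> < c" by simp
qed

lemma inv_hitting_meas:
  assumes sub: "stable_subordinator N \<alpha> S"
  shows "inv_hitting S t \<in> borel_measurable N"
  unfolding borel_measurable_iff_less
proof
  fix c :: real
  have [measurable]: "S (real j) \<in> borel_measurable N" for j :: nat using sub_meas[OF sub] by simp
  have [measurable]: "S (real k / 2 ^ n) \<in> borel_measurable N" for k n :: nat using sub_meas[OF sub] by simp
  define E where "E = {\<omega>\<in>space N. \<forall>j::nat. S (real j) \<omega> \<le> t}"
  define D where "D = {\<omega>\<in>space N. \<exists>n k::nat. real k / 2 ^ n < c \<and> t < S (real k / 2 ^ n) \<omega>}"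
  have Es: "E \<in> sets N" unfolding E_def by measurable
  have Ds: "D \<in> sets N" unfolding D_def by measurable
  have eq: "{\<omega>\<in>space N. inv_hitting S t \<omega> < c} = (if Inf ({}::real set) < c then E else {}) \<union> (D - E)"
  proof (rule set_eqI)
    fix \<omega>
    show "\<omega> \<in> {\<omega>\<in>space N. inv_hitting S t \<omega> < c} \<longleftrightarrow> \<omega> \<in> (if Inf ({}::real set) < c then E else {}) \<union> (D - E)"
    proof (cases "\<omega> \<in> space N")
      case False then show ?thesis by (auto simp: E_def D_def)
    next
      case True
      show ?thesis
      proof (cases "\<omega> \<in> E")
        case inE: True
        then have "inv_hitting S t \<omega> = Inf ({}::real set)"
          using inv_hitting_empty[OF sub True] by (auto simp: E_def)
        then show ?thesis using inE True by auto
      next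
        case notE: False
        then obtain j :: nat where j: "t < S (real j) \<omega>" using True by (auto simp: E_def not_le)
        show ?thesis using inv_hitting_less_iff[OF sub True j, of c] notE True by (auto simp: D_def)
      qed
    qed
  qed
  show "{\<omega>\<in>space N. inv_hitting S t \<omega> < c} \<in> sets N"
    unfolding eq using Es Ds by auto
qed

lemma F_bounds:
  assumes sub: "stable_subordinator N \<alpha> S"
  shows F1: "0 \<le> y \<Longrightarrow> measure N {\<omega>\<in>space N. inv_hitting S t \<omega> \<le> y} \<le> measure N {\<omega>\<in>space N. t \<le> S y \<omega>}"
    and F2: "0 \<le> y \<Longrightarrow> measure N {\<omega>\<in>space N. t < S y \<omega>} \<le> measure N {\<omega>\<in>space N. inv_hitting S t \<omega> \<le> y}"
    and F3: "y < 0 \<Longrightarrow> measure N {\<omega>\<in>space N. inv_hitting S t \<omega> \<le> y} = 0"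
proof -
  interpret prob_space N using sub_prob[OF sub] .
  have [measurable]: "inv_hitting S t \<in> borel_measurable N" by (rule inv_hitting_meas[OF sub])
  define E where "E = {\<omega>\<in>space N. \<forall>j::nat. S (real j) \<omega> \<le> t}"
  have Es: "E \<in> sets N" and E0: "measure N E = 0" unfolding E_def using sub_Ec_null[OF sub] by auto
  {
    assume y: "0 \<le> y"
    have [measurable]: "S y \<in> borel_measurable N" using sub_meas[OF sub y] .
    have "measure N {\<omega>\<in>space N. inv_hitting S t \<omega> \<le> y} \<le> measure N ({\<omega>\<in>space N. t \<le> S y \<omega>} \<union> E)"
    proof (rule finite_measure_mono)
      show "{\<omega>\<in>space N. t \<le> S y \<omega>} \<union> E \<in> sets N" using Es by measurable
      show "{\<omega>\<in>space N. inv_hitting S t \<omega> \<le> y} \<subseteq> {\<omega>\<in>space N. t \<le> S y \<omega>} \<union> E"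
      proof safe
        fix \<omega> assume \<omega>: "\<omega> \<in> space N" "inv_hitting S t \<omega> \<le> y" "\<omega> \<notin> E"
        then obtain j :: nat where "t < S (real j) \<omega>" by (auto simp: E_def not_le)
        from inv_hitting_imp[OF sub \<omega>(1) this y \<omega>(2)] show "t \<le> S y \<omega>" .
      qed
    qed
    also have "\<dots> \<le> measure N {\<omega>\<in>space N. t \<le> S y \<omega>} + measure N E"
      by (rule measure_subadditive) (use Es in \<open>auto simp: emeasure_finite less_top[symmetric]\<close>)
    finally show "measure N {\<omega>\<in>space N. inv_hitting S t \<omega> \<le> y} \<le> measure N {\<omega>\<in>space N. t \<le> S y \<omega>}"
      using E0 by simp
    show "measure N {\<omega>\<in>space N. t < S y \<omega>} \<le> measure N {\<omega>\<in>space N. inv_hitting S t \<omega> \<le> y}"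
    proof (rule finite_measure_mono)
      show "{\<omega>\<in>space N. inv_hitting S t \<omega> \<le> y} \<in> sets N" by measurable
      show "{\<omega>\<in>space N. t < S y \<omega>} \<subseteq> {\<omega>\<in>space N. inv_hitting S t \<omega> \<le> y}"
        using inv_hitting_le[OF y] by auto
    qed
  }
  assume y: "y < 0"
  have "measure N {\<omega>\<in>space N. inv_hitting S t \<omega> \<le> y} \<le> measure N E"
  proof (rule finite_measure_mono[OF _ Es])
    show "{\<omega>\<in>space N. inv_hitting S t \<omega> \<le> y} \<subseteq> E"
    proof safe
      fix \<omega> assume \<omega>: "\<omega> \<in> space N" "inv_hitting S t \<omega> \<le> y"
      show "\<omega> \<in> E"
      proof (rule ccontr)
        assume "\<omega> \<notin> E"
        then obtain j :: nat where "t < S (real j) \<omega>" using \<omega> by (auto simp: E_def not_le)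
        from inv_hitting_nonneg[of t S j \<omega>, OF this] \<omega> y show False by simp
      qed
    qed
  qed
  moreover have "0 \<le> measure N {\<omega>\<in>space N. inv_hitting S t \<omega> \<le> y}" by (rule measure_nonneg)
  ultimately show "measure N {\<omega>\<in>space N. inv_hitting S t \<omega> \<le> y} = 0" using E0 by linarith
qed

lemma sibuya_sum_mono:
  "k \<le> k' \<Longrightarrow> sibuya_sum Z k \<omega> \<le> sibuya_sum Z k' \<omega>"
  unfolding sibuya_sum_def by (intro sum_mono2) auto

lemma sibuya_sum_ge:
  assumes "\<And>j. 1 \<le> j \<Longrightarrow> Z j \<omega> \<noteq> 0"
  shows "k \<le> sibuya_sum Z k \<omega>"
proof -
  have "k = (\<Sum>j\<in>{1..k}. (1::nat))" by simp
  also have "\<dots> \<le> sibuya_sum Z k \<omega>" unfolding sibuya_sum_def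
    using assms by (intro sum_mono) (auto simp: Suc_le_eq)
  finally show ?thesis .
qed

lemma sibuya_count_less_iff:
  assumes pos: "\<And>j. 1 \<le> j \<Longrightarrow> Z j \<omega> \<noteq> 0"
  shows "sibuya_count Z m \<omega> < K \<longleftrightarrow> m < sibuya_sum Z K \<omega>"
proof -
  define A where "A = {n. sibuya_sum Z n \<omega> \<le> m}"
  have Asub: "A \<subseteq> {..m}" unfolding A_def using sibuya_sum_ge[of Z \<omega>, OF pos] by (auto intro: order.trans)
  then have fin: "finite A" by (rule finite_subset) simp
  have "0 \<in> A" unfolding A_def by (simp add: sibuya_sum_def)
  then have ne: "A \<noteq> {}" by blast
  have L: "sibuya_count Z m \<omega> = Max A" unfolding sibuya_count_def A_def ..
  show ?thesis
  proof
    assume "sibuya_count Z m \<omega> < K"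
    then have "K \<notin> A" using L Max_ge[OF fin] by (metis not_le)
    then show "m < sibuya_sum Z K \<omega>" unfolding A_def by simp
  next
    assume mK: "m < sibuya_sum Z K \<omega>"
    show "sibuya_count Z m \<omega> < K"
    proof (rule ccontr)
      assume "\<not> sibuya_count Z m \<omega> < K"
      then have "K \<le> Max A" using L by simp
      then have 1: "sibuya_sum Z K \<omega> \<le> sibuya_sum Z (Max A) \<omega>" by (rule sibuya_sum_mono)
      have "Max A \<in> A" using Max_in[OF fin ne] .
      then have "sibuya_sum Z (Max A) \<omega> \<le> m" unfolding A_def by simp
      with 1 have "sibuya_sum Z K \<omega> \<le> m" by (rule order.trans)
      with mK show False by simp
    qed
  qed
qed

lemma count_event_iff:
  assumes pos: "\<And>j. 1 \<le> j \<Longrightarrow> Z j \<omega> \<noteq> 0"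
    and n: "1 \<le> n" and x: "0 \<le> x" and t: "0 < t"
  shows "(real n powr (- \<alpha>) * real (sibuya_count Z (nat \<lfloor>real n * t\<rfloor>) \<omega>) \<le> x) \<longleftrightarrow>
         t < real (sibuya_sum Z (nat \<lfloor>x * real n powr \<alpha>\<rfloor> + 1) \<omega>) / real n"
proof -
  define L where "L = sibuya_count Z (nat \<lfloor>real n * t\<rfloor>) \<omega>"
  define K where "K = nat \<lfloor>x * real n powr \<alpha>\<rfloor> + 1"
  define s where "s = sibuya_sum Z K \<omega>"
  have np: "0 < real n powr \<alpha>" using n by simp
  have "(real n powr (- \<alpha>) * real L \<le> x) \<longleftrightarrow> real L \<le> x * real n powr \<alpha>"
    using np by (simp add: powr_minus_divide field_simps)
  also have "\<dots> \<longleftrightarrow> L < K"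
  proof -
    have z: "0 \<le> x * real n powr \<alpha>" using x np by simp
    have "real L \<le> x * real n powr \<alpha> \<longleftrightarrow> int L \<le> \<lfloor>x * real n powr \<alpha>\<rfloor>"
      by (simp add: le_floor_iff)
    also have "\<dots> \<longleftrightarrow> L < K" unfolding K_def using z by linarith
    finally show ?thesis .
  qed
  also have "\<dots> \<longleftrightarrow> nat \<lfloor>real n * t\<rfloor> < s"
    unfolding L_def s_def by (rule sibuya_count_less_iff[of Z \<omega>, OF pos])
  also have "\<dots> \<longleftrightarrow> \<not> (int s \<le> \<lfloor>real n * t\<rfloor>)"
  proof -
    have "0 \<le> \<lfloor>real n * t\<rfloor>" using t by simp
    then show ?thesis by (simp add: nat_less_iff not_le)
  qed
  also have "\<dots> \<longleftrightarrow> \<not> (real s \<le> real n * t)" by (simp add: le_floor_iff)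
  also have "\<dots> \<longleftrightarrow> t < real s / real n" using n by (simp add: field_simps not_le)
  finally show ?thesis unfolding L_def K_def s_def .
qed

lemma cdf_distr_eq:
  assumes "f \<in> borel_measurable M"
  shows "cdf (distr M borel f) x = measure M {\<omega>\<in>space M. f \<omega> \<le> x}"
proof -
  have "cdf (distr M borel f) x = measure M (f -` {..x} \<inter> space M)"
    unfolding cdf_def2 using assms by (simp add: measure_distr)
  also have "f -` {..x} \<inter> space M = {\<omega>\<in>space M. f \<omega> \<le> x}" by auto
  finally show ?thesis .
qed

lemma prob_gt_compl:
  fixes X :: "'a \<Rightarrow> real"
  assumes "prob_space M" "X \<in> borel_measurable M"
  shows "measure M {\<omega>\<in>space M. t < X \<omega>} = 1 - measure M {\<omega>\<in>space M. X \<omega> \<le> t}"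
proof -
  interpret prob_space M by fact
  have "{\<omega>\<in>space M. t < X \<omega>} = space M - {\<omega>\<in>space M. X \<omega> \<le> t}" by auto
  moreover have "{\<omega>\<in>space M. X \<omega> \<le> t} \<in> events" using assms(2) by measurable
  ultimately show ?thesis using prob_compl by simp
qed

lemma sib_setup:
  fixes Z :: "nat \<Rightarrow> 'a \<Rightarrow> nat"
  assumes a0: "0 < \<alpha>" and a1: "\<alpha> < 1" and M: "prob_space M"
    and ind: "prob_space.indep_vars M (\<lambda>_. count_space UNIV) Z {1..}"
    and pmf: "\<And>i k. 1 \<le> i \<Longrightarrow> 1 \<le> k \<Longrightarrow>
           measure M {\<omega>\<in>space M. Z i \<omega> = k} = sibuya_pmf \<alpha> k"
  shows sib_AE: "AE \<omega> in M. \<forall>j. 1 \<le> j \<longrightarrow> Z j \<omega> \<noteq> 0"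
    and sib_sum_meas: "\<And>k. (\<lambda>\<omega>. real (sibuya_sum Z k \<omega>)) \<in> borel_measurable M"
    and sib_count_meas: "\<And>m. sibuya_count Z m \<in> measurable M (count_space UNIV)"
    and sib_sum_lap: "\<And>s k. 0 \<le> s \<Longrightarrow> (\<integral>\<omega>. exp (- s * real (sibuya_sum Z k \<omega>)) \<partial>M)
                               = (1 - (1 - exp (-s)) powr \<alpha>) ^ k"
proof -
  interpret prob_space M by fact
  have Zm: "Z i \<in> measurable M (count_space UNIV)" if "1 \<le> i" for i
    using ind that unfolding indep_vars_def by auto
  have lapZ: "(\<integral>\<omega>. exp (- s * real (Z i \<omega>)) \<partial>M) = 1 - (1 - exp (-s)) powr \<alpha>"
    if "1 \<le> i" "0 \<le> s" for i s
    using sib_one(2)[OF a0 a1 M Zm[OF that(1)] pmf[OF that(1)] that(2)] .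
  show "\<And>s k. 0 \<le> s \<Longrightarrow> (\<integral>\<omega>. exp (- s * real (sibuya_sum Z k \<omega>)) \<partial>M)
                               = (1 - (1 - exp (-s)) powr \<alpha>) ^ k"
  proof -
    fix s :: real and k assume s: "0 \<le> s"
    show "(\<integral>\<omega>. exp (- s * real (sibuya_sum Z k \<omega>)) \<partial>M) = (1 - (1 - exp (-s)) powr \<alpha>) ^ k"
      by (rule sum_lap[OF M ind s]) (rule lapZ[OF _ s])
  qed
  have "AE \<omega> in M. 1 \<le> j \<longrightarrow> Z j \<omega> \<noteq> 0" for j
  proof (cases "1 \<le> j")
    case True
    have [measurable]: "Z j \<in> measurable M (count_space UNIV)" using Zm[OF True] .
    have m0: "measure M {\<omega>\<in>space M. Z j \<omega> = 0} = 0"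
      using sib_one(1)[OF a0 a1 M Zm[OF True] pmf[OF True]] .
    have "AE \<omega> in M. Z j \<omega> \<noteq> 0"
    proof (subst AE_iff_measurable[where N="{\<omega>\<in>space M. Z j \<omega> = 0}"])
      show "{\<omega>\<in>space M. Z j \<omega> = 0} \<in> sets M" by measurable
      show "{x \<in> space M. \<not> Z j x \<noteq> 0} = {\<omega> \<in> space M. Z j \<omega> = 0}" by auto
      show "emeasure M {\<omega>\<in>space M. Z j \<omega> = 0} = 0" using m0 by (simp add: emeasure_eq_measure)
    qed
    then show ?thesis by auto
  qed simp
  then show "AE \<omega> in M. \<forall>j. 1 \<le> j \<longrightarrow> Z j \<omega> \<noteq> 0" by (subst AE_all_countable) auto
  show sm: "(\<lambda>\<omega>. real (sibuya_sum Z k \<omega>)) \<in> borel_measurable M" for k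
  proof -
    have "(\<lambda>\<omega>. \<Sum>j\<in>{1..k}. real (Z j \<omega>)) \<in> borel_measurable M"
    proof (rule borel_measurable_sum)
      fix j assume "j \<in> {1..k}"
      then have [measurable]: "Z j \<in> measurable M (count_space UNIV)" using Zm by auto
      show "(\<lambda>\<omega>. real (Z j \<omega>)) \<in> borel_measurable M" by measurable
    qed
    then show ?thesis by (simp add: sibuya_sum_def)
  qed
  show "sibuya_count Z m \<in> measurable M (count_space UNIV)" for m
    unfolding sibuya_count_def
  proof (rule measurable_Max_nat)
    fix n
    have [measurable]: "(\<lambda>\<omega>. real (sibuya_sum Z n \<omega>)) \<in> borel_measurable M" by (rule sm)
    have "{\<omega>\<in>space M. real (sibuya_sum Z n \<omega>) \<le> real m} \<in> sets M" by measurable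
    then show "Measurable.pred M (\<lambda>x. sibuya_sum Z n x \<le> m)" by (simp add: pred_def)
  qed
qed

lemma Xs_lap_conv:
  fixes Z :: "nat \<Rightarrow> 'a \<Rightarrow> nat"
  assumes a0: "0 < \<alpha>" and a1: "\<alpha> < 1" and M: "prob_space M"
    and ind: "prob_space.indep_vars M (\<lambda>_. count_space UNIV) Z {1..}"
    and pmf: "\<And>i k. 1 \<le> i \<Longrightarrow> 1 \<le> k \<Longrightarrow>
           measure M {\<omega>\<in>space M. Z i \<omega> = k} = sibuya_pmf \<alpha> k"
    and sub: "stable_subordinator N \<alpha> S" and y: "0 \<le> y"
  shows "(\<lambda>n. \<integral>\<omega>. exp (- real m * (real (sibuya_sum Z (nat \<lfloor>y * real n powr \<alpha>\<rfloor> + 1) \<omega>) / real n)) \<partial>M)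
           \<longlonglongrightarrow> (\<integral>\<omega>. exp (- real m * S y \<omega>) \<partial>N)"
proof -
  interpret prob_space M by fact
  have R: "(\<integral>\<omega>. exp (- real m * S y \<omega>) \<partial>N) = exp (- y * real m powr \<alpha>)"
    using sub_lap[OF sub y, of "real m"] by simp
  show ?thesis
  proof (cases "m = 0")
    case True
    then show ?thesis using R by (simp add: prob_space)
  next
    case False
    then have mpos: "0 < real m" by simp
    have lim: "(\<lambda>n. (1 - (1 - exp (- real m / real n)) powr \<alpha>) ^ (nat \<lfloor>y * real n powr \<alpha>\<rfloor> + 1))
           \<longlonglongrightarrow> exp (- y * real m powr \<alpha>)"
      by (rule sib_lim[OF a0 a1 mpos y])
    have ev: "eventually (\<lambda>n. (1 - (1 - exp (- real m / real n)) powr \<alpha>) ^ (nat \<lfloor>y * real n powr \<alpha>\<rfloor> + 1)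
        = (\<integral>\<omega>. exp (- real m * (real (sibuya_sum Z (nat \<lfloor>y * real n powr \<alpha>\<rfloor> + 1) \<omega>) / real n)) \<partial>M)) sequentially"
      using eventually_ge_at_top[of 1]
    proof eventually_elim
      case (elim n)
      have "(\<integral>\<omega>. exp (- real m * (real (sibuya_sum Z (nat \<lfloor>y * real n powr \<alpha>\<rfloor> + 1) \<omega>) / real n)) \<partial>M)
          = (\<integral>\<omega>. exp (- (real m / real n) * real (sibuya_sum Z (nat \<lfloor>y * real n powr \<alpha>\<rfloor> + 1) \<omega>)) \<partial>M)"
        by simp
      also have "\<dots> = (1 - (1 - exp (- (real m / real n))) powr \<alpha>) ^ (nat \<lfloor>y * real n powr \<alpha>\<rfloor> + 1)"
        by (rule sib_sum_lap[OF a0 a1 M ind pmf]) auto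
      finally show ?case by simp
    qed
    show ?thesis unfolding R using Lim_transform_eventually[OF lim ev] .
  qed
qed

theorem mainTheorem1:
  fixes M :: "'a measure" and N :: "'b measure" and \<alpha> t :: real
    and Z :: "nat \<Rightarrow> 'a \<Rightarrow> nat" and S :: "real \<Rightarrow> 'b \<Rightarrow> real"
  assumes "0 < \<alpha>" "\<alpha> < 1"
    and "prob_space M"
    and "prob_space.indep_vars M (\<lambda>_. count_space UNIV) Z {1..}"
    and "\<And>i k. 1 \<le> i \<Longrightarrow> 1 \<le> k \<Longrightarrow>
           measure M {\<omega>\<in>space M. Z i \<omega> = k} = sibuya_pmf \<alpha> k"
    and "stable_subordinator N \<alpha> S"
    and "0 < t"
  shows "weak_conv_m
           (\<lambda>n. distr M borel
                  (\<lambda>\<omega>. real n powr (- \<alpha>) * real (sibuya_count Z (nat \<lfloor>real n * t\<rfloor>) \<omega>)))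
           (distr N borel (inv_hitting S t))"
proof -
  note a0 = assms(1) and a1 = assms(2) and Mp = assms(3) and ind = assms(4) and pmf = assms(5)
    and sub = assms(6) and t = assms(7)
  interpret M: prob_space M by (rule Mp)
  have Np: "prob_space N" by (rule sub_prob[OF sub])
  interpret N: prob_space N by (rule Np)
  define f where "f n \<omega> = real n powr (- \<alpha>) * real (sibuya_count Z (nat \<lfloor>real n * t\<rfloor>) \<omega>)" for n \<omega>
  define G where "G y = measure N {\<omega>\<in>space N. inv_hitting S t \<omega> \<le> y}" for y
  define P where "P n y = measure M {\<omega>\<in>space M. f n \<omega> \<le> y}" for n y
  define Xs where "Xs y n \<omega> = real (sibuya_sum Z (nat \<lfloor>y * real n powr \<alpha>\<rfloor> + 1) \<omega>) / real n" for y n \<omega>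
  have fm: "f n \<in> borel_measurable M" for n
  proof -
    have [measurable]: "sibuya_count Z m \<in> measurable M (count_space UNIV)" for m
      by (rule sib_count_meas[OF a0 a1 Mp ind pmf])
    show ?thesis unfolding f_def by measurable
  qed
  have Lm: "inv_hitting S t \<in> borel_measurable N" by (rule inv_hitting_meas[OF sub])
  have Xm: "Xs y n \<in> borel_measurable M" for y n
  proof -
    have [measurable]: "(\<lambda>\<omega>. real (sibuya_sum Z k \<omega>)) \<in> borel_measurable M" for k
      by (rule sib_sum_meas[OF a0 a1 Mp ind pmf])
    show ?thesis unfolding Xs_def by measurable
  qed
  have Xnn: "0 \<le> Xs y n \<omega>" for y n \<omega> unfolding Xs_def by simp
  have cdfP: "cdf (distr M borel (f n)) y = P n y" for n y
    unfolding P_def by (rule cdf_distr_eq[OF fm])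
  have cdfP': "cdf (distr M borel (\<lambda>\<omega>. real n powr (- \<alpha>) * real (sibuya_count Z (nat \<lfloor>real n * t\<rfloor>) \<omega>))) y = P n y" for n y
    using cdfP[of n y] unfolding f_def by simp
  have cdfG: "cdf (distr N borel (inv_hitting S t)) = G"
    by (rule ext) (unfold G_def, rule cdf_distr_eq[OF Lm])
  have key: "P n y = measure M {\<omega>\<in>space M. t < Xs y n \<omega>}" if n: "1 \<le> n" and y: "0 \<le> y" for n y
    unfolding P_def
  proof (rule measure_eq_AE)
    show "AE \<omega> in M. (\<omega> \<in> {\<omega>\<in>space M. f n \<omega> \<le> y}) = (\<omega> \<in> {\<omega>\<in>space M. t < Xs y n \<omega>})"
      using sib_AE[OF a0 a1 Mp ind pmf]
    proof (rule eventually_mono)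
      fix \<omega> assume pos: "\<forall>j. 1 \<le> j \<longrightarrow> Z j \<omega> \<noteq> 0"
      have "(f n \<omega> \<le> y) = (t < Xs y n \<omega>)"
        unfolding f_def Xs_def by (rule count_event_iff[OF _ n y t]) (use pos in auto)
      then show "(\<omega> \<in> {\<omega>\<in>space M. f n \<omega> \<le> y}) = (\<omega> \<in> {\<omega>\<in>space M. t < Xs y n \<omega>})" by auto
    qed
    show "{\<omega>\<in>space M. f n \<omega> \<le> y} \<in> sets M" using fm[of n] by measurable
    show "{\<omega>\<in>space M. t < Xs y n \<omega>} \<in> sets M" using Xm[of y n] by measurable
  qed
  have lapc: "(\<lambda>n. \<integral>\<omega>. exp (- real m * Xs y n \<omega>) \<partial>M) \<longlonglongrightarrow> (\<integral>\<omega>. exp (- real m * S y \<omega>) \<partial>N)"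
    if "0 \<le> y" for y m
    unfolding Xs_def by (rule Xs_lap_conv[OF a0 a1 Mp ind pmf sub that])
  have Sm: "S y \<in> borel_measurable N" if "0 \<le> y" for y using sub_meas[OF sub that] .
  have Snn: "\<And>\<omega>. \<omega> \<in> space N \<Longrightarrow> 0 \<le> S y \<omega>" if "0 \<le> y" for y using sub_nonneg[OF sub _ that] by blast
  have Pmono: "P n y \<le> P n x" if "y \<le> x" for n y x
    unfolding P_def
  proof (rule M.finite_measure_mono)
    show "{\<omega>\<in>space M. f n \<omega> \<le> x} \<in> sets M" using fm[of n] by measurable
  qed (use that in auto)
  have Pnn: "0 \<le> P n y" for n y unfolding P_def by simp
  show ?thesis
    unfolding weak_conv_m_def weak_conv_def cdfP' cdfG
  proof (intro allI impI)
    fix x assume cont: "isCont G x"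
    show "(\<lambda>n. P n x) \<longlonglongrightarrow> G x"
    proof (cases "x < 0")
      case True
      have "P n x = 0" for n
      proof -
        have "{\<omega>\<in>space M. f n \<omega> \<le> x} = {}" using True unfolding f_def
          by (auto simp: not_le intro: order.strict_trans2[OF True] mult_nonneg_nonneg)
        then show ?thesis unfolding P_def by (simp only: measure_empty)
      qed
      moreover have "G x = 0" unfolding G_def by (rule F3[OF sub True])
      ultimately show ?thesis by simp
    next
      case False
      then have x: "0 \<le> x" by simp
      show ?thesis
      proof (rule order_tendstoI)
        fix a assume aG: "a < G x"
        have "(\<lambda>j. x - inverse (real (Suc j))) \<longlonglongrightarrow> x - 0"
          by (intro tendsto_intros LIMSEQ_inverse_real_of_nat)
        then have lim: "(\<lambda>j. G (x - inverse (real (Suc j)))) \<longlonglongrightarrow> G x"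
          using isCont_tendsto_compose[OF cont] by simp
        obtain j where j: "a < G (x - inverse (real (Suc j)))"
          using order_tendstoD(1)[OF lim aG] by (auto simp: eventually_sequentially)
        define y0 where "y0 = x - inverse (real (Suc j))"
        define y' where "y' = x - inverse (real (Suc j)) / 2"
        have y0y': "y0 < y'" "y' \<le> x" unfolding y0_def y'_def by simp_all
        show "eventually (\<lambda>n. a < P n x) sequentially"
        proof (cases "y0 < 0")
          case True
          have "G y0 = 0" unfolding G_def by (rule F3[OF sub True])
          then have "a < 0" using j unfolding y0_def by simp
          then have "\<And>n. a < P n x" using Pnn by (metis order.strict_trans2)
          then show ?thesis by simp
        next
          case False
          then have y0: "0 \<le> y0" by simp
          then have y': "0 \<le> y'" using y0y' by simp
          have Gy0: "G y0 \<le> measure N {\<omega>\<in>space N. t < S y' \<omega>}"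
          proof -
            have "G y0 \<le> measure N {\<omega>\<in>space N. t \<le> S y0 \<omega>}" unfolding G_def by (rule F1[OF sub y0])
            also have "\<dots> \<le> measure N {\<omega>\<in>space N. t < S y' \<omega>}"
              by (rule sub_scaling[OF sub a0 y0 y0y'(1) t])
            finally show ?thesis .
          qed
          define e where "e = (G y0 - a) / 2"
          have e: "0 < e" unfolding e_def using j y0_def by simp
          have ev: "eventually (\<lambda>n. measure M {\<omega>\<in>space M. Xs y' n \<omega> \<le> t}
              \<le> measure N {\<omega>\<in>space N. S y' \<omega> \<le> t} + e) sequentially"
            by (rule laplace_tool(2)[OF Mp Np Xm Sm[OF y'] _ Snn[OF y'] lapc[OF y'] e]) (rule Xnn)
          have NC: "measure N {\<omega>\<in>space N. t < S y' \<omega>} = 1 - measure N {\<omega>\<in>space N. S y' \<omega> \<le> t}"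
            by (rule prob_gt_compl[OF Np Sm[OF y']])
          show ?thesis
            using ev eventually_ge_at_top[of 1]
          proof eventually_elim
            case (elim n)
            have "P n y' \<le> P n x" by (rule Pmono[OF y0y'(2)])
            moreover have "P n y' = measure M {\<omega>\<in>space M. t < Xs y' n \<omega>}" by (rule key[OF elim(2) y'])
            moreover have "measure M {\<omega>\<in>space M. t < Xs y' n \<omega>} = 1 - measure M {\<omega>\<in>space M. Xs y' n \<omega> \<le> t}"
              by (rule prob_gt_compl[OF Mp Xm])
            moreover have "a < G y0" using j unfolding y0_def .
            ultimately have s1: "1 - measure M {\<omega>\<in>space M. Xs y' n \<omega> \<le> t} \<le> P n x" by linarith
            have s2: "1 - measure N {\<omega>\<in>space N. S y' \<omega> \<le> t} - e \<le> 1 - measure M {\<omega>\<in>space M. Xs y' n \<omega> \<le> t}"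
              using elim(1) by linarith
            have s3: "G y0 - e \<le> 1 - measure N {\<omega>\<in>space N. S y' \<omega> \<le> t} - e" using NC Gy0 by linarith
            have s4: "a < G y0 - e" using \<open>a < G y0\<close> unfolding e_def by (simp add: field_simps)
            show ?case using s1 s2 s3 s4 by linarith
          qed
        qed
      next
        fix a assume aG: "G x < a"
        define e where "e = (a - G x) / 2"
        have e: "0 < e" unfolding e_def using aG by simp
        have SG: "measure N {\<omega>\<in>space N. t \<le> S x \<omega>} \<le> G x"
        proof -
          have "(\<lambda>j. x + inverse (real (Suc j))) \<longlonglongrightarrow> x + 0"
            by (intro tendsto_intros LIMSEQ_inverse_real_of_nat)
          then have lim: "(\<lambda>j. G (x + inverse (real (Suc j)))) \<longlonglongrightarrow> G x"
            using isCont_tendsto_compose[OF cont] by simp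
          show ?thesis
          proof (rule LIMSEQ_le_const[OF lim], intro exI allI impI)
            fix j :: nat
            have "measure N {\<omega>\<in>space N. t \<le> S x \<omega>} \<le> measure N {\<omega>\<in>space N. t < S (x + inverse (real (Suc j))) \<omega>}"
              by (rule sub_scaling[OF sub a0 x _ t]) simp
            also have "\<dots> \<le> G (x + inverse (real (Suc j)))"
              unfolding G_def by (rule F2[OF sub]) (use x in simp)
            finally show "measure N {\<omega>\<in>space N. t \<le> S x \<omega>} \<le> G (x + inverse (real (Suc j)))" .
          qed
        qed
        have ev: "eventually (\<lambda>n. measure M {\<omega>\<in>space M. t \<le> Xs x n \<omega>}
            \<le> measure N {\<omega>\<in>space N. t \<le> S x \<omega>} + e) sequentially"
          by (rule laplace_tool(1)[OF Mp Np Xm Sm[OF x] _ Snn[OF x] lapc[OF x] e]) (rule Xnn)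
        show "eventually (\<lambda>n. P n x < a) sequentially"
          using ev eventually_ge_at_top[of 1]
        proof eventually_elim
          case (elim n)
          have "P n x = measure M {\<omega>\<in>space M. t < Xs x n \<omega>}" by (rule key[OF elim(2) x])
          also have "\<dots> \<le> measure M {\<omega>\<in>space M. t \<le> Xs x n \<omega>}"
          proof (rule M.finite_measure_mono)
            show "{\<omega>\<in>space M. t \<le> Xs x n \<omega>} \<in> sets M" using Xm[of x n] by measurable
          qed auto
          finally have "P n x \<le> measure N {\<omega>\<in>space N. t \<le> S x \<omega>} + e"
            using elim(1) by (rule order.trans)
          then have "P n x \<le> G x + e" using SG by linarith
          moreover have "G x + e < a" unfolding e_def using aG by (simp add: field_simps)
          ultimately show ?case by linarith
        qed
      qed
    qed
  qed
qed

end
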